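(* For every integer $n\ge0$ and real $x$, $$\mathfrak{C}_{n+1}(x)=x\sum_{k=0}^{\lfloor n/2\rfloor}4^{-k}\binom{n+1}{2k+1}\mathfrak{C}_{n-2k}(x).$$
   Context: For $n\ge1$ the central factorial is $x^{[n]}=x\,(x+\tfrac n2-1)(x+\tfrac n2-2)\cdots(x-\tfrac n2+1)$ (a product of $n$ factors), and $x^{[0]}=1$. The central factorial numbers of the second kind $T(n,k)$ ($0\le k\le n$) are defined by $x^n=\sum_{k=0}^n T(n,k)\,x^{[k]}$; equivalently $T(n,k)=\frac1{k!}\sum_{j=0}^k(-1)^j\binom kj\left(\frac k2-j\right)^n$, and $T(n,k)=0$ for $k>n$. The $n$th central Fubini-like polynomial is $\mathfrak{C}_n(x)=\sum_{k=0}^n k!\,T(n,k)\,x^k$. *)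

theory Defs
  imports Complex_Main
begin

definition central_fact_T :: "nat \<Rightarrow> nat \<Rightarrow> real" where
  "central_fact_T n k =
     (\<Sum>j\<le>k. (-1)^j * real (k choose j) * (real k / 2 - real j) ^ n) / fact k"

definition central_fubini :: "nat \<Rightarrow> real \<Rightarrow> real" where
  "central_fubini n x = (\<Sum>k\<le>n. fact k * central_fact_T n k * x ^ k)"

end

theory Submission
  imports Defs
begin


lemma alt_pascal:
  fixes g :: "nat \<Rightarrow> real"
  shows "(\<Sum>j\<le>Suc k. (-1)^j * real (Suc k choose j) * g j)
       = (\<Sum>j\<le>k. (-1)^j * real (k choose j) * (g j - g (Suc j)))"
proof -
  define S1 where "S1 = (\<Sum>j\<le>k. (-1)^j * real (k choose j) * g (Suc j))"
  define S2 where "S2 = (\<Sum>j\<le>k. (-1)^j * real (k choose Suc j) * g (Suc j))"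
  define S0 where "S0 = (\<Sum>j\<le>k. (-1)^j * real (k choose j) * g j)"
  have A: "(\<Sum>j\<le>Suc k. (-1)^j * real (Suc k choose j) * g j) = g 0 - S1 - S2"
    unfolding S1_def S2_def
    by (simp add: sum.atMost_Suc_shift sum.distrib[symmetric] sum_negf[symmetric] sum_subtractf[symmetric] algebra_simps del: sum.atMost_Suc)
  have B: "(\<Sum>j\<le>Suc k. (-1)^j * real (k choose j) * g j) = g 0 - S2"
    unfolding S2_def
    by (simp add: sum.atMost_Suc_shift sum_negf[symmetric] sum_subtractf[symmetric] del: sum.atMost_Suc)
  have C: "(\<Sum>j\<le>Suc k. (-1)^j * real (k choose j) * g j) = S0"
    unfolding S0_def by simp
  have D: "(\<Sum>j\<le>k. (-1)^j * real (k choose j) * (g j - g (Suc j))) = S0 - S1"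
    unfolding S0_def S1_def by (simp add: sum_subtractf[symmetric] algebra_simps)
  show ?thesis using A B C D by simp
qed

definition FF :: "nat \<Rightarrow> nat \<Rightarrow> real" where
  "FF n k = (\<Sum>j\<le>k. (-1)^j * real (k choose j) * (real k / 2 - real j) ^ n)"
definition ss :: "nat \<Rightarrow> real" where
  "ss m = (1/2)^m - (-1/2)^m"

lemma diff_binom: "(a + 1/2)^n - (a - 1/2)^n = (\<Sum>m\<le>n. real (n choose m) * ss m * (a::real)^(n-m))"
proof -
  have 1: "(a + 1/2)^n = (\<Sum>m\<le>n. real (n choose m) * (1/2)^m * a^(n-m))"
    using binomial_ring[of "1/2" a n] by (simp add: add.commute)
  have 2: "(a - 1/2)^n = (\<Sum>m\<le>n. real (n choose m) * (-1/2)^m * a^(n-m))"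
    using binomial_ring[of "-1/2" a n] by (simp add: add.commute)
  show ?thesis unfolding 1 2 ss_def by (simp add: sum_subtractf[symmetric] algebra_simps)
qed

lemma FF_rec: "FF n (Suc k) = (\<Sum>m\<le>n. real (n choose m) * ss m * FF (n-m) k)"
proof -
  have "FF n (Suc k) = (\<Sum>j\<le>k. (-1)^j * real (k choose j) *
      ((real (Suc k) / 2 - real j)^n - (real (Suc k) / 2 - real (Suc j))^n))"
    unfolding FF_def by (rule alt_pascal)
  also have "\<dots> = (\<Sum>j\<le>k. (-1)^j * real (k choose j) *
      (\<Sum>m\<le>n. real (n choose m) * ss m * (real k / 2 - real j)^(n-m)))"
  proof (rule sum.cong[OF refl])
    fix j
    have "(real (Suc k) / 2 - real j)^n - (real (Suc k) / 2 - real (Suc j))^n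
        = ((real k / 2 - real j) + 1/2)^n - ((real k / 2 - real j) - 1/2)^n"
    proof -
      have "real (Suc k) / 2 - real j = (real k / 2 - real j) + 1/2" by simp
      moreover have "real (Suc k) / 2 - real (Suc j) = (real k / 2 - real j) - 1/2" by simp
      ultimately show ?thesis by (simp only:)
    qed
    then show "(-1)^j * real (k choose j) *
      ((real (Suc k) / 2 - real j)^n - (real (Suc k) / 2 - real (Suc j))^n) =
      (-1)^j * real (k choose j) *
      (\<Sum>m\<le>n. real (n choose m) * ss m * (real k / 2 - real j)^(n-m))"
      by (simp add: diff_binom)
  qed
  also have "\<dots> = (\<Sum>m\<le>n. real (n choose m) * ss m * FF (n-m) k)"
    unfolding FF_def sum_distrib_left
    by (subst sum.swap) (simp add: algebra_simps)
  finally show ?thesis .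
qed

lemma ss0: "ss 0 = 0" by (simp add: ss_def)
lemma ss_even: "even m \<Longrightarrow> ss m = 0" by (simp add: ss_def power_minus_even)
lemma ss_odd: "ss (2*k+1) = 1 / 4^k"
proof -
  have "ss (2*k+1) = 2 * (1/2)^(2*k+1)" by (simp add: ss_def)
  also have "\<dots> = 1/4^k" by (simp add: power_mult power_divide)
  finally show ?thesis .
qed

lemma FF_0: "FF n 0 = 0^n" by (simp add: FF_def)

lemma FF_vanish: "p < k \<Longrightarrow> FF p k = 0"
proof (induction p arbitrary: k rule: less_induct)
  case (less p)
  then obtain k' where k: "k = Suc k'" by (cases k) auto
  have "FF p k = (\<Sum>m\<le>p. real (p choose m) * ss m * FF (p-m) k')"
    using FF_rec k by simp
  also have "\<dots> = 0"
  proof (rule sum.neutral, rule ballI)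
    fix m assume "m \<in> {..p}"
    show "real (p choose m) * ss m * FF (p-m) k' = 0"
    proof (cases m)
      case 0 then show ?thesis by (simp add: ss0)
    next
      case (Suc m')
      have "FF (p-m) k' = 0" using less Suc k \<open>m \<in> {..p}\<close> by (intro less.IH) auto
      then show ?thesis by simp
    qed
  qed
  finally show ?case .
qed


lemma cf_FF: "central_fubini n x = (\<Sum>k\<le>n. FF n k * x^k)"
  unfolding central_fubini_def central_fact_T_def FF_def by simp

lemma inner:
  assumes "1 \<le> m" "m \<le> Suc n"
  shows "(\<Sum>k\<le>n. FF (Suc n - m) k * x^k) = central_fubini (Suc n - m) x"
proof -
  have "(\<Sum>k\<le>n. FF (Suc n - m) k * x^k) = (\<Sum>k\<le>Suc n - m. FF (Suc n - m) k * x^k)"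
    by (rule sum.mono_neutral_right) (use assms FF_vanish in auto)
  then show ?thesis by (simp add: cf_FF)
qed

theorem theorem11:
  fixes n :: nat and x :: real
  shows "central_fubini (n + 1) x =
    x * (\<Sum>k\<le>n div 2. (1 / 4 ^ k) * real ((n + 1) choose (2 * k + 1))
                          * central_fubini (n - 2 * k) x)"
proof -
  define h where "h m = real (Suc n choose m) * ss m * central_fubini (Suc n - m) x" for m
  have "central_fubini (n + 1) x = (\<Sum>k\<le>Suc n. FF (Suc n) k * x^k)"
    by (simp add: cf_FF)
  also have "\<dots> = (\<Sum>k\<le>n. FF (Suc n) (Suc k) * x^(Suc k))"
    by (simp add: sum.atMost_Suc_shift FF_0 del: sum.atMost_Suc)
  also have "\<dots> = x * (\<Sum>k\<le>n. \<Sum>m\<le>Suc n. real (Suc n choose m) * ss m * FF (Suc n - m) k * x^k)"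
    by (simp add: FF_rec sum_distrib_left sum_distrib_right algebra_simps)
  also have "\<dots> = x * (\<Sum>m\<le>Suc n. real (Suc n choose m) * ss m * (\<Sum>k\<le>n. FF (Suc n - m) k * x^k))"
    by (subst sum.swap) (simp add: sum_distrib_left algebra_simps)
  also have "\<dots> = x * (\<Sum>m\<le>Suc n. h m)"
  proof -
    have "(\<Sum>m\<le>Suc n. real (Suc n choose m) * ss m * (\<Sum>k\<le>n. FF (Suc n - m) k * x^k)) = (\<Sum>m\<le>Suc n. h m)"
    proof (rule sum.cong[OF refl])
      fix m assume m: "m \<in> {..Suc n}"
      show "real (Suc n choose m) * ss m * (\<Sum>k\<le>n. FF (Suc n - m) k * x^k) = h m"
      proof (cases "m = 0")
        case True then show ?thesis by (simp add: h_def ss0)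
      next
        case False then show ?thesis using m by (simp add: h_def inner)
      qed
    qed
    then show ?thesis by simp
  qed
  also have "(\<Sum>m\<le>Suc n. h m) = (\<Sum>m\<in>(\<lambda>k. 2*k+1) ` {..n div 2}. h m)"
  proof (rule sym, rule sum.mono_neutral_left)
    show "finite {..Suc n}" by simp
    show "(\<lambda>k. 2*k+1) ` {..n div 2} \<subseteq> {..Suc n}" by auto
    show "\<forall>i\<in>{..Suc n} - (\<lambda>k. 2*k+1) ` {..n div 2}. h i = 0"
    proof
      fix i assume i: "i \<in> {..Suc n} - (\<lambda>k. 2*k+1) ` {..n div 2}"
      have "even i"
      proof (rule ccontr)
        assume "odd i"
        then obtain k where "i = 2*k+1" by (metis oddE)
        with i show False by auto
      qed
      then show "h i = 0" by (simp add: h_def ss_even)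
    qed
  qed
  also have "\<dots> = (\<Sum>k\<le>n div 2. h (2*k+1))"
    by (subst sum.reindex) (auto simp: inj_on_def)
  also have "\<dots> = (\<Sum>k\<le>n div 2. (1 / 4 ^ k) * real ((n + 1) choose (2 * k + 1))
                          * central_fubini (n - 2 * k) x)"
    by (rule sum.cong[OF refl]) (simp only: h_def ss_odd Suc_eq_plus1, simp add: mult.commute)
  finally show ?thesis .
qed

end
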